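(* Let $T$ be a split Leibniz triple system with symmetric root system $\Lambda^1$, suppose $\Lambda^0$ is symmetric, and fix $\alpha_0\in\Lambda^1$. Let $\alpha\in\Lambda^1_{\alpha_0}$ and $\beta,\gamma\in\Lambda^1\cup\{0\}$. Then: (1) if $\{T_\alpha,T_\beta,T_\gamma\}\neq0$ then $\beta,\gamma,\alpha+\beta+\gamma\in\Lambda^1_{\alpha_0}\cup\{0\}$; (2) if $\{T_\beta,T_\alpha,T_\gamma\}\neq0$ then $\beta,\gamma,\beta+\alpha+\gamma\in\Lambda^1_{\alpha_0}\cup\{0\}$; (3) if $\{T_\beta,T_\gamma,T_\alpha\}\neq0$ then $\beta,\gamma,\beta+\gamma+\alpha\in\Lambda^1_{\alpha_0}\cup\{0\}$.
   Context: A Leibniz triple system is a vector space $T$ over a field $\mathbb{K}$ with a trilinear product $\{\cdot,\cdot,\cdot\}$ satisfying, for all $a,b,c,d,e\in T$: $\{a,\{b,c,d\},e\}=\{\{a,b,c\},d,e\}-\{\{a,c,b\},d,e\}-\{\{a,d,b\},c,e\}+\{\{a,d,c\},b,e\}$ and $\{a,b,\{c,d,e\}\}=\{\{a,b,c\},d,e\}-\{\{a,b,d\},c,e\}-\{\{a,b,e\},c,d\}+\{\{a,b,e\},d,c\}$. Its standard embedding is the right Leibniz algebra $L=L^0\oplus L^1$ ($L^0$ the span of symbols $x\otimes y$, $L^1=T$) with product $[(x\otimes y,z),(u\otimes v,w)]=(\{x,y,u\}\otimes v-\{x,y,v\}\otimes u+z\otimes w,\ \{x,y,w\}+\{z,u,v\}-\{z,v,u\})$;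 so $[x,y]=x\otimes y$ and $\{x,y,z\}=[[x,y],z]$ for $x,y,z\in T$. Let $H^0$ be a maximal abelian subalgebra of $L^0$; for $\alpha\in(H^0)^*$ put $T_\alpha=\{t\in T:[t,h]=\alpha(h)t\ \forall h\in H^0\}$, $L^0_\alpha=\{v\in L^0:[v,h]=\alpha(h)v\ \forall h\in H^0\}$, $\Lambda^1=\{\alpha\neq0:T_\alpha\neq0\}$, $\Lambda^0=\{\alpha\neq0:L^0_\alpha\neq0\}$. $T$ is split (w.r.t. $H^0$) if $T=T_0\oplus\bigoplus_{\alpha\in\Lambda^1}T_\alpha$, $\{T_0,T_0,T_0\}=0$ and $\{T_\alpha,T_{-\alpha},T_0\}=0$ for all $\alpha\in\Lambda^1$. A set $\Lambda\subset(H^0)^*$ is symmetric if $\alpha\in\Lambda$ implies $-\alpha\in\Lambda$. Two roots $\alpha,\beta\in\Lambda^1$ are connected if there is a family $\alpha_1,\dots,\alpha_{2n+1}\in\Lambda^1\cup\{0\}$ with: $\alpha_1+\dots+\alpha_{2k+1}\in\Lambda^1$ for $k=0,\dots,n$; $\alpha_1+\dots+\alpha_{2k}\in\Lambda^0$ for $k=1,\dots,n$; $\alpha_1=\alpha$ and $\alpha_1+\dots+\alpha_{2n+1}\in\{\beta,-\beta\}$. $\Lambda^1_{\alpha_0}$ denotes the set of $\beta\in\Lambda^1$ connected with $\alpha_0$. *)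

theory Defs
  imports Complex_Main
begin

definition trilinear :: "('k::field \<Rightarrow> 'v::ab_group_add \<Rightarrow> 'v) \<Rightarrow> ('v \<Rightarrow> 'v \<Rightarrow> 'v \<Rightarrow> 'v) \<Rightarrow> bool" where
  "trilinear sT p \<longleftrightarrow>
     (\<forall>b c. Vector_Spaces.linear sT sT (\<lambda>a. p a b c)) \<and>
     (\<forall>a c. Vector_Spaces.linear sT sT (\<lambda>b. p a b c)) \<and>
     (\<forall>a b. Vector_Spaces.linear sT sT (\<lambda>c. p a b c))"

definition leibniz_triple_system ::
  "('k::field \<Rightarrow> 'v::ab_group_add \<Rightarrow> 'v) \<Rightarrow> ('v \<Rightarrow> 'v \<Rightarrow> 'v \<Rightarrow> 'v) \<Rightarrow> bool" where
  "leibniz_triple_system sT p \<longleftrightarrow>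
     vector_space sT \<and> trilinear sT p \<and>
     (\<forall>a b c d e. p a (p b c d) e =
        p (p a b c) d e - p (p a c b) d e - p (p a d b) c e + p (p a d c) b e) \<and>
     (\<forall>a b c d e. p a b (p c d e) =
        p (p a b c) d e - p (p a b d) c e - p (p a b e) c d + p (p a b e) d c)"

definition bilinear_map ::
  "('k::field \<Rightarrow> 'a::ab_group_add \<Rightarrow> 'a) \<Rightarrow> ('k \<Rightarrow> 'b::ab_group_add \<Rightarrow> 'b) \<Rightarrow>
   ('k \<Rightarrow> 'c::ab_group_add \<Rightarrow> 'c) \<Rightarrow> ('a \<Rightarrow> 'b \<Rightarrow> 'c) \<Rightarrow> bool" where
  "bilinear_map s1 s2 s3 f \<longleftrightarrow>
     (\<forall>y. Vector_Spaces.linear s1 s3 (\<lambda>x. f x y)) \<and>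
     (\<forall>x. Vector_Spaces.linear s2 s3 (\<lambda>y. f x y))"

text \<open>
  L^0 is a K-vector space (scalar multiplication sL) spanned by the symbols
  tens x y (= x \<otimes> y = [x,y]).  br0 is the product on L^0, actL the product
  L^0 x T -> T and actR the product T x L^0 -> T, so that on generators
  [x\<otimes>y, u\<otimes>v] = {x,y,u}\<otimes>v - {x,y,v}\<otimes>u,  [x\<otimes>y, w] = {x,y,w},
  [z, u\<otimes>v] = {z,u,v} - {z,v,u},  [z,w] = z\<otimes>w,
  and the total product on L = L^0 x T is a right Leibniz algebra.
\<close>

definition emb_prod ::
  "('l \<Rightarrow> 'l \<Rightarrow> 'l::ab_group_add) \<Rightarrow> ('v \<Rightarrow> 'v \<Rightarrow> 'l) \<Rightarrow> ('l \<Rightarrow> 'v \<Rightarrow> 'v::ab_group_add) \<Rightarrow>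
   ('v \<Rightarrow> 'l \<Rightarrow> 'v) \<Rightarrow> ('l \<times> 'v) \<Rightarrow> ('l \<times> 'v) \<Rightarrow> ('l \<times> 'v)" where
  "emb_prod br0 tens actL actR p q =
     (br0 (fst p) (fst q) + tens (snd p) (snd q),
      actL (fst p) (snd q) + actR (snd p) (fst q))"

definition pair_add :: "('l::plus \<times> 'v::plus) \<Rightarrow> ('l \<times> 'v) \<Rightarrow> ('l \<times> 'v)" where
  "pair_add p q = (fst p + fst q, snd p + snd q)"

definition standard_embedding ::
  "('k::field \<Rightarrow> 'v::ab_group_add \<Rightarrow> 'v) \<Rightarrow> ('k \<Rightarrow> 'l::ab_group_add \<Rightarrow> 'l) \<Rightarrow>
   ('v \<Rightarrow> 'v \<Rightarrow> 'v \<Rightarrow> 'v) \<Rightarrow> ('v \<Rightarrow> 'v \<Rightarrow> 'l) \<Rightarrow> ('l \<Rightarrow> 'l \<Rightarrow> 'l) \<Rightarrow>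
   ('l \<Rightarrow> 'v \<Rightarrow> 'v) \<Rightarrow> ('v \<Rightarrow> 'l \<Rightarrow> 'v) \<Rightarrow> bool" where
  "standard_embedding sT sL p tens br0 actL actR \<longleftrightarrow>
     vector_space sL \<and>
     bilinear_map sT sT sL tens \<and> bilinear_map sL sL sL br0 \<and>
     bilinear_map sL sT sT actL \<and> bilinear_map sT sL sT actR \<and>
     module.span sL {tens x y | x y. True} = UNIV \<and>
     (\<forall>x y u v. br0 (tens x y) (tens u v) = tens (p x y u) v - tens (p x y v) u) \<and>
     (\<forall>x y w. actL (tens x y) w = p x y w) \<and>
     (\<forall>z u v. actR z (tens u v) = p z u v - p z v u) \<and>
     (\<forall>a b c. emb_prod br0 tens actL actR (emb_prod br0 tens actL actR a b) c =
        pair_add (emb_prod br0 tens actL actR (emb_prod br0 tens actL actR a c) b)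
                 (emb_prod br0 tens actL actR a (emb_prod br0 tens actL actR b c)))"

definition abelian_subalgebra ::
  "('k::field \<Rightarrow> 'l::ab_group_add \<Rightarrow> 'l) \<Rightarrow> ('l \<Rightarrow> 'l \<Rightarrow> 'l) \<Rightarrow> 'l set \<Rightarrow> bool" where
  "abelian_subalgebra sL br0 H \<longleftrightarrow>
     module.subspace sL H \<and> (\<forall>x\<in>H. \<forall>y\<in>H. br0 x y \<in> H) \<and> (\<forall>x\<in>H. \<forall>y\<in>H. br0 x y = 0)"

definition maximal_abelian_subalgebra ::
  "('k::field \<Rightarrow> 'l::ab_group_add \<Rightarrow> 'l) \<Rightarrow> ('l \<Rightarrow> 'l \<Rightarrow> 'l) \<Rightarrow> 'l set \<Rightarrow> bool" where
  "maximal_abelian_subalgebra sL br0 H \<longleftrightarrow>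
     abelian_subalgebra sL br0 H \<and>
     (\<forall>H'. abelian_subalgebra sL br0 H' \<and> H \<subseteq> H' \<longrightarrow> H' = H)"

text \<open>Elements of the dual space (H^0)^*: linear functionals on H, represented
  as functions on L^0 that vanish outside H (so the representation is unique).\<close>
definition dual_space ::
  "('k::field \<Rightarrow> 'l::ab_group_add \<Rightarrow> 'l) \<Rightarrow> 'l set \<Rightarrow> ('l \<Rightarrow> 'k) set" where
  "dual_space sL H = {f. (\<forall>x\<in>H. \<forall>y\<in>H. f (x + y) = f x + f y) \<and>
                         (\<forall>c. \<forall>x\<in>H. f (sL c x) = c * f x) \<and>
                         (\<forall>x. x \<notin> H \<longrightarrow> f x = 0)}"

definition zero_fun :: "'l \<Rightarrow> 'k::field" where "zero_fun = (\<lambda>_. 0)"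
definition neg_fun :: "('l \<Rightarrow> 'k::field) \<Rightarrow> 'l \<Rightarrow> 'k" where "neg_fun f = (\<lambda>h. - f h)"
definition add_fun :: "('l \<Rightarrow> 'k::field) \<Rightarrow> ('l \<Rightarrow> 'k) \<Rightarrow> 'l \<Rightarrow> 'k" where
  "add_fun f g = (\<lambda>h. f h + g h)"

definition root_space_T ::
  "('k::field \<Rightarrow> 'v::ab_group_add \<Rightarrow> 'v) \<Rightarrow> ('v \<Rightarrow> 'l \<Rightarrow> 'v) \<Rightarrow> 'l set \<Rightarrow> ('l \<Rightarrow> 'k) \<Rightarrow> 'v set" where
  "root_space_T sT actR H a = {t. \<forall>h\<in>H. actR t h = sT (a h) t}"

definition root_space_L0 ::
  "('k::field \<Rightarrow> 'l::ab_group_add \<Rightarrow> 'l) \<Rightarrow> ('l \<Rightarrow> 'l \<Rightarrow> 'l) \<Rightarrow> 'l set \<Rightarrow> ('l \<Rightarrow> 'k) \<Rightarrow> 'l set" where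
  "root_space_L0 sL br0 H a = {v. \<forall>h\<in>H. br0 v h = sL (a h) v}"

definition roots1 ::
  "('k::field \<Rightarrow> 'v::ab_group_add \<Rightarrow> 'v) \<Rightarrow> ('k \<Rightarrow> 'l::ab_group_add \<Rightarrow> 'l) \<Rightarrow>
   ('v \<Rightarrow> 'l \<Rightarrow> 'v) \<Rightarrow> 'l set \<Rightarrow> ('l \<Rightarrow> 'k) set" where
  "roots1 sT sL actR H = {a \<in> dual_space sL H. a \<noteq> zero_fun \<and> root_space_T sT actR H a \<noteq> {0}}"

definition roots0 ::
  "('k::field \<Rightarrow> 'l::ab_group_add \<Rightarrow> 'l) \<Rightarrow> ('l \<Rightarrow> 'l \<Rightarrow> 'l) \<Rightarrow> 'l set \<Rightarrow> ('l \<Rightarrow> 'k) set" where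
  "roots0 sL br0 H = {a \<in> dual_space sL H. a \<noteq> zero_fun \<and> root_space_L0 sL br0 H a \<noteq> {0}}"

definition symmetric_set :: "('l \<Rightarrow> 'k::field) set \<Rightarrow> bool" where
  "symmetric_set R \<longleftrightarrow> (\<forall>a\<in>R. neg_fun a \<in> R)"

definition triple_nonzero :: "('v \<Rightarrow> 'v \<Rightarrow> 'v \<Rightarrow> 'v::zero) \<Rightarrow> 'v set \<Rightarrow> 'v set \<Rightarrow> 'v set \<Rightarrow> bool" where
  "triple_nonzero p A B C \<longleftrightarrow> (\<exists>x\<in>A. \<exists>y\<in>B. \<exists>z\<in>C. p x y z \<noteq> 0)"

definition split_LTS ::
  "('k::field \<Rightarrow> 'v::ab_group_add \<Rightarrow> 'v) \<Rightarrow> ('k \<Rightarrow> 'l::ab_group_add \<Rightarrow> 'l) \<Rightarrow>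
   ('v \<Rightarrow> 'v \<Rightarrow> 'v \<Rightarrow> 'v) \<Rightarrow> ('v \<Rightarrow> 'l \<Rightarrow> 'v) \<Rightarrow> 'l set \<Rightarrow> bool" where
  "split_LTS sT sL p actR H \<longleftrightarrow>
     module.span sT (\<Union>a \<in> roots1 sT sL actR H \<union> {zero_fun}. root_space_T sT actR H a) = UNIV \<and>
     \<not> triple_nonzero p (root_space_T sT actR H zero_fun) (root_space_T sT actR H zero_fun)
                        (root_space_T sT actR H zero_fun) \<and>
     (\<forall>a \<in> roots1 sT sL actR H.
        \<not> triple_nonzero p (root_space_T sT actR H a) (root_space_T sT actR H (neg_fun a))
                           (root_space_T sT actR H zero_fun))"

definition psum :: "(nat \<Rightarrow> 'l \<Rightarrow> 'k::field) \<Rightarrow> nat \<Rightarrow> 'l \<Rightarrow> 'k" where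
  "psum f k = (\<lambda>h. \<Sum>i\<in>{1..k}. f i h)"

definition connected_roots ::
  "('l \<Rightarrow> 'k::field) set \<Rightarrow> ('l \<Rightarrow> 'k) set \<Rightarrow> ('l \<Rightarrow> 'k) \<Rightarrow> ('l \<Rightarrow> 'k) \<Rightarrow> bool" where
  "connected_roots R1 R0 a b \<longleftrightarrow>
     (\<exists>(n::nat) (f :: nat \<Rightarrow> 'l \<Rightarrow> 'k).
        (\<forall>i\<in>{1..2*n+1}. f i \<in> R1 \<union> {zero_fun}) \<and>
        (\<forall>k\<in>{0..n}. psum f (2*k+1) \<in> R1) \<and>
        (\<forall>k\<in>{1..n}. psum f (2*k) \<in> R0) \<and>
        f 1 = a \<and>
        psum f (2*n+1) \<in> {b, neg_fun b})"

definition connected_class ::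
  "('l \<Rightarrow> 'k::field) set \<Rightarrow> ('l \<Rightarrow> 'k) set \<Rightarrow> ('l \<Rightarrow> 'k) \<Rightarrow> ('l \<Rightarrow> 'k) set" where
  "connected_class R1 R0 a0 = {b \<in> R1. connected_roots R1 R0 a0 b}"

end

theory Submission imports Defs begin

lemma psum_Suc: "psum f (Suc m) = add_fun (psum f m) (f (Suc m))"
  unfolding psum_def add_fun_def by (simp add: sum.cl_ivl_Suc)

lemma psum_cong: "(\<And>i. i \<le> k \<Longrightarrow> f i = g i) \<Longrightarrow> psum f k = psum g k"
  unfolding psum_def by (intro ext sum.cong) auto

lemma conn_ext:
  assumes f1: "\<forall>i\<in>{1..2*n+1}. f i \<in> R1 \<union> {zero_fun}"
    and f2: "\<forall>k\<in>{0..n}. psum f (2*k+1) \<in> R1"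
    and f3: "\<forall>k\<in>{1..n}. psum f (2*k) \<in> R0"
    and f4: "f 1 = a0" and f5: "psum f (2*n+1) = u"
    and r: "r \<in> R1 \<union> {zero_fun}" and s: "s \<in> R1 \<union> {zero_fun}"
    and ur: "add_fun u r \<in> R0" and urs: "add_fun (add_fun u r) s \<in> R1"
  shows "\<exists>m g. (\<forall>i\<in>{1..2*m+1}. g i \<in> R1 \<union> {zero_fun}) \<and> (\<forall>k\<in>{0..m}. psum g (2*k+1) \<in> R1)
     \<and> (\<forall>k\<in>{1..m}. psum g (2*k) \<in> R0) \<and> g 1 = a0 \<and> psum g (2*m+1) = add_fun (add_fun u r) s"
proof -
  define g where "g i = (if i \<le> 2*n+1 then f i else if i = 2*n+2 then r else s)" for i
  have pg: "psum g k = psum f k" if "k \<le> 2*n+1" for k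
    using that by (intro psum_cong) (auto simp: g_def)
  have p2: "psum g (2*(n+1)) = add_fun u r"
  proof -
    have "psum g (2*(n+1)) = psum g (Suc (2*n+1))" by simp
    also have "\<dots> = add_fun (psum g (2*n+1)) (g (Suc (2*n+1)))" by (rule psum_Suc)
    finally show ?thesis using pg[of "2*n+1"] f5 by (simp add: g_def)
  qed
  have p3: "psum g (2*(n+1)+1) = add_fun (add_fun u r) s"
  proof -
    have "psum g (2*(n+1)+1) = psum g (Suc (2*(n+1)))" by simp
    also have "\<dots> = add_fun (psum g (2*(n+1))) (g (Suc (2*(n+1))))" by (rule psum_Suc)
    finally show ?thesis using p2 by (simp add: g_def)
  qed
  have A: "\<forall>i\<in>{1..2*(n+1)+1}. g i \<in> R1 \<union> {zero_fun}"
    using f1 r s by (auto simp: g_def)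
  have B: "\<forall>k\<in>{0..n+1}. psum g (2*k+1) \<in> R1"
  proof
    fix k assume "k \<in> {0..n+1}"
    then consider "k \<le> n" | "k = n+1" by fastforce
    then show "psum g (2*k+1) \<in> R1"
    proof cases
      case 1 then show ?thesis using pg[of "2*k+1"] f2 by auto
    next
      case 2 then show ?thesis using p3 urs by simp
    qed
  qed
  have C: "\<forall>k\<in>{1..n+1}. psum g (2*k) \<in> R0"
  proof
    fix k assume "k \<in> {1..n+1}"
    then consider "k \<in> {1..n}" | "k = n+1" by fastforce
    then show "psum g (2*k) \<in> R0"
    proof cases
      case 1 then show ?thesis using pg[of "2*k"] f3 by auto
    next
      case 2 then show ?thesis using p2 ur by simp
    qed
  qed
  have D: "g 1 = a0" using f4 by (simp add: g_def)
  show ?thesis using A B C D p3 by blast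
qed

lemma neg_neg[simp]: "neg_fun (neg_fun f) = f" by (simp add: neg_fun_def)

lemma sym_neg: "symmetric_set R \<Longrightarrow> a \<in> R \<Longrightarrow> neg_fun a \<in> R"
  by (simp add: symmetric_set_def)

lemma sym_neg0: "symmetric_set R \<Longrightarrow> a \<in> R \<union> {zero_fun} \<Longrightarrow> neg_fun a \<in> R \<union> {zero_fun}"
  by (auto simp: symmetric_set_def neg_fun_def zero_fun_def)

lemma conn_step:
  assumes sym1: "symmetric_set R1" and sym0: "symmetric_set R0"
    and v: "v \<in> connected_class R1 R0 a0"
    and r: "r \<in> R1 \<union> {zero_fun}" and s: "s \<in> R1 \<union> {zero_fun}"
    and vr: "add_fun v r \<in> R0" and vrs: "add_fun (add_fun v r) s \<in> R1"
  shows "add_fun (add_fun v r) s \<in> connected_class R1 R0 a0"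
proof -
  let ?t = "add_fun (add_fun v r) s"
  from v obtain n f where f1: "\<forall>i\<in>{1..2*n+1}. f i \<in> R1 \<union> {zero_fun}"
    and f2: "\<forall>k\<in>{0..n}. psum f (2*k+1) \<in> R1"
    and f3: "\<forall>k\<in>{1..n}. psum f (2*k) \<in> R0"
    and f4: "f 1 = a0" and f5: "psum f (2*n+1) \<in> {v, neg_fun v}"
    unfolding connected_class_def connected_roots_def by blast
  from f5 have "\<exists>m g. (\<forall>i\<in>{1..2*m+1}. g i \<in> R1 \<union> {zero_fun}) \<and> (\<forall>k\<in>{0..m}. psum g (2*k+1) \<in> R1)
     \<and> (\<forall>k\<in>{1..m}. psum g (2*k) \<in> R0) \<and> g 1 = a0 \<and> psum g (2*m+1) \<in> {?t, neg_fun ?t}"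
  proof
    assume e: "psum f (2*n+1) = v"
    from conn_ext[OF f1 f2 f3 f4 e r s vr vrs] show ?thesis by blast
  next
    assume "psum f (2*n+1) \<in> {neg_fun v}"
    then have e: "psum f (2*n+1) = neg_fun v" by simp
    have r': "neg_fun r \<in> R1 \<union> {zero_fun}" by (rule sym_neg0[OF sym1 r])
    have s': "neg_fun s \<in> R1 \<union> {zero_fun}" by (rule sym_neg0[OF sym1 s])
    have e1: "add_fun (neg_fun v) (neg_fun r) = neg_fun (add_fun v r)"
      by (simp add: add_fun_def neg_fun_def)
    have e2: "add_fun (add_fun (neg_fun v) (neg_fun r)) (neg_fun s) = neg_fun ?t"
      by (simp add: add_fun_def neg_fun_def)
    have vr': "add_fun (neg_fun v) (neg_fun r) \<in> R0" using e1 sym_neg[OF sym0 vr] by simp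
    have vrs': "add_fun (add_fun (neg_fun v) (neg_fun r)) (neg_fun s) \<in> R1"
      using e2 sym_neg[OF sym1 vrs] by simp
    from conn_ext[OF f1 f2 f3 f4 e r' s' vr' vrs'] e2 show ?thesis by auto
  qed
  then show ?thesis using vrs unfolding connected_class_def connected_roots_def by blast
qed

lemma conn_neg:
  assumes sym1: "symmetric_set R1" and v: "v \<in> connected_class R1 R0 a0"
  shows "neg_fun v \<in> connected_class R1 R0 a0"
  using v sym_neg[OF sym1] unfolding connected_class_def connected_roots_def by auto

lemma cc_R1: "v \<in> connected_class R1 R0 a0 \<Longrightarrow> v \<in> R1"
  by (simp add: connected_class_def)

lemma Gplus:
  assumes sym1: "symmetric_set R1" and sym0: "symmetric_set R0"
    and al: "al \<in> connected_class R1 R0 a0" and g: "g \<in> R1"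
    and h: "add_fun al g = zero_fun \<or> add_fun al g \<in> R0"
  shows "g \<in> connected_class R1 R0 a0"
  using h
proof
  assume "add_fun al g = zero_fun"
  then have "g = neg_fun al"
    by (auto simp: add_fun_def zero_fun_def neg_fun_def fun_eq_iff eq_neg_iff_add_eq_0 add.commute)
  then show ?thesis using conn_neg[OF sym1 al] by simp
next
  assume h: "add_fun al g \<in> R0"
  have e: "add_fun (add_fun al g) (neg_fun al) = g" by (simp add: add_fun_def neg_fun_def)
  have "add_fun (add_fun al g) (neg_fun al) \<in> connected_class R1 R0 a0"
    using conn_step[OF sym1 sym0 al _ _ h, of "neg_fun al"] g sym_neg[OF sym1 cc_R1[OF al]] e by simp
  then show ?thesis using e by simp
qed

lemma Gminus:
  assumes sym1: "symmetric_set R1" and sym0: "symmetric_set R0"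
    and al: "al \<in> connected_class R1 R0 a0" and g: "g \<in> R1"
    and h: "add_fun (neg_fun al) g = zero_fun \<or> add_fun (neg_fun al) g \<in> R0"
  shows "g \<in> connected_class R1 R0 a0"
  using h
proof
  assume "add_fun (neg_fun al) g = zero_fun"
  then have "g = al"
    by (auto simp: add_fun_def zero_fun_def neg_fun_def fun_eq_iff)
  then show ?thesis using al by simp
next
  assume h: "add_fun (neg_fun al) g \<in> R0"
  have e0: "add_fun al (neg_fun g) = neg_fun (add_fun (neg_fun al) g)" by (simp add: add_fun_def neg_fun_def)
  have h': "add_fun al (neg_fun g) \<in> R0" using e0 sym_neg[OF sym0 h] by simp
  have e: "add_fun (add_fun al (neg_fun g)) (neg_fun al) = neg_fun g" by (simp add: add_fun_def neg_fun_def)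
  have "add_fun (add_fun al (neg_fun g)) (neg_fun al) \<in> connected_class R1 R0 a0"
    using conn_step[OF sym1 sym0 al _ _ h', of "neg_fun al"] sym_neg[OF sym1 g] sym_neg[OF sym1 cc_R1[OF al]] e by simp
  then have "neg_fun g \<in> connected_class R1 R0 a0" using e by simp
  from conn_neg[OF sym1 this] show ?thesis by simp
qed

lemma Mlem:
  assumes sym1: "symmetric_set R1" and sym0: "symmetric_set R0"
    and al: "al \<in> connected_class R1 R0 a0"
    and b: "b \<in> R1 \<union> {zero_fun}" and c: "c \<in> R1 \<union> {zero_fun}"
    and ab: "add_fun al b \<in> R0"
    and d: "add_fun (add_fun al b) c \<in> R1 \<union> {zero_fun}"
  shows "b \<in> connected_class R1 R0 a0 \<union> {zero_fun} \<and> c \<in> connected_class R1 R0 a0 \<union> {zero_fun}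
     \<and> add_fun (add_fun al b) c \<in> connected_class R1 R0 a0 \<union> {zero_fun}"
proof (intro conjI)
  have na: "neg_fun al \<in> R1 \<union> {zero_fun}" using sym_neg[OF sym1 cc_R1[OF al]] by simp
  show "b \<in> connected_class R1 R0 a0 \<union> {zero_fun}"
  proof (cases "b = zero_fun")
    case False
    then have bR: "b \<in> R1" using b by simp
    have e: "add_fun (add_fun al b) (neg_fun al) = b" by (simp add: add_fun_def neg_fun_def)
    have "add_fun (add_fun al b) (neg_fun al) \<in> connected_class R1 R0 a0"
      using conn_step[OF sym1 sym0 al b na ab] e bR by simp
    then show ?thesis using e by simp
  qed simp
  show D: "add_fun (add_fun al b) c \<in> connected_class R1 R0 a0 \<union> {zero_fun}"
    using d conn_step[OF sym1 sym0 al b c ab] by auto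
  show "c \<in> connected_class R1 R0 a0 \<union> {zero_fun}"
  proof (cases "c = zero_fun")
    case False
    then have cR: "c \<in> R1" using c by simp
    let ?d = "add_fun (add_fun al b) c"
    show ?thesis
    proof (cases "?d = zero_fun")
      case True
      then have e: "add_fun al b = neg_fun c"
        by (auto simp: add_fun_def zero_fun_def neg_fun_def fun_eq_iff eq_neg_iff_add_eq_0)
      have abR: "add_fun al b \<in> R1" using e sym_neg[OF sym1 cR] by simp
      have e2: "add_fun (add_fun al b) zero_fun = add_fun al b" by (simp add: add_fun_def zero_fun_def)
      have "add_fun (add_fun al b) zero_fun \<in> connected_class R1 R0 a0"
        using conn_step[OF sym1 sym0 al b _ ab, of zero_fun] abR e2 by simp
      then have "neg_fun c \<in> connected_class R1 R0 a0" using e2 e by simp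
      from conn_neg[OF sym1 this] show ?thesis by simp
    next
      case False
      then have dC: "?d \<in> connected_class R1 R0 a0" using D by simp
      have e1: "add_fun ?d (neg_fun c) = add_fun al b" by (simp add: add_fun_def neg_fun_def)
      have e2: "add_fun (add_fun ?d (neg_fun c)) (neg_fun ?d) = neg_fun c"
        by (simp add: add_fun_def neg_fun_def)
      have "add_fun (add_fun ?d (neg_fun c)) (neg_fun ?d) \<in> connected_class R1 R0 a0"
        using conn_step[OF sym1 sym0 dC sym_neg0[OF sym1 c] sym_neg0[OF sym1 d]] e1 e2 ab
          sym_neg[OF sym1 cR] by simp
      then have "neg_fun c \<in> connected_class R1 R0 a0" using e2 by simp
      from conn_neg[OF sym1 this] show ?thesis by simp
    qed
  qed simp
qed


lemma lin0: "Vector_Spaces.linear s1 s2 f \<Longrightarrow> f 0 = 0"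
  by (metis linear_iff_module_hom module_hom.zero)
lemma linS: "Vector_Spaces.linear s1 s2 f \<Longrightarrow> f (s1 r x) = s2 r (f x)"
  by (metis linear_iff_module_hom module_hom.scale)

lemma bil:
  assumes "bilinear_map s1 s2 s3 f"
  shows "f 0 y = 0" "f x 0 = 0" "f (s1 r x) y = s3 r (f x y)" "f x (s2 r y) = s3 r (f x y)"
  using assms unfolding bilinear_map_def
  by (auto intro: lin0[of s1 s3 "\<lambda>x. f x y"] lin0[of s2 s3 "\<lambda>y. f x y"]
      linS[of s1 s3 "\<lambda>x. f x y"] linS[of s2 s3 "\<lambda>y. f x y"])

context
  fixes sT :: "'k::field \<Rightarrow> 'v::ab_group_add \<Rightarrow> 'v"
    and sL :: "'k \<Rightarrow> 'l::ab_group_add \<Rightarrow> 'l"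
    and p :: "'v \<Rightarrow> 'v \<Rightarrow> 'v \<Rightarrow> 'v"
    and tens :: "'v \<Rightarrow> 'v \<Rightarrow> 'l"
    and br0 :: "'l \<Rightarrow> 'l \<Rightarrow> 'l"
    and actL :: "'l \<Rightarrow> 'v \<Rightarrow> 'v"
    and actR :: "'v \<Rightarrow> 'l \<Rightarrow> 'v"
    and H :: "'l set"
  assumes lts: "leibniz_triple_system sT p"
    and emb: "standard_embedding sT sL p tens br0 actL actR"
begin

lemma vsT: "vector_space sT" using lts by (simp add: leibniz_triple_system_def)
lemma vsL: "vector_space sL" using emb by (simp add: standard_embedding_def)

lemma bT: "bilinear_map sT sT sL tens" using emb by (simp add: standard_embedding_def)
lemma bB: "bilinear_map sL sL sL br0" using emb by (simp add: standard_embedding_def)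
lemma bLL: "bilinear_map sL sT sT actL" using emb by (simp add: standard_embedding_def)
lemma bRR: "bilinear_map sT sL sT actR" using emb by (simp add: standard_embedding_def)

lemmas zs = bil(1,2)[OF bT] bil(1,2)[OF bB] bil(1,2)[OF bLL] bil(1,2)[OF bRR]

lemma pL: "p x y z = actL (tens x y) z" using emb by (simp add: standard_embedding_def)

lemma Leib: "emb_prod br0 tens actL actR (emb_prod br0 tens actL actR a b) c =
        pair_add (emb_prod br0 tens actL actR (emb_prod br0 tens actL actR a c) b)
                 (emb_prod br0 tens actL actR a (emb_prod br0 tens actL actR b c))"
  using emb unfolding standard_embedding_def by blast

lemma idA: "br0 (tens x y) h = tens (actR x h) y + tens x (actR y h)"
  using arg_cong[OF Leib[of "(0,x)" "(0,y)" "(h,0)"], of fst]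
  by (simp add: emb_prod_def pair_add_def zs)

lemma idB: "actR (actL w z) h = actL (br0 w h) z + actL w (actR z h)"
  using arg_cong[OF Leib[of "(w,0)" "(0,z)" "(h,0)"], of snd]
  by (simp add: emb_prod_def pair_add_def zs)

lemma idC: "p x y z = p x z y + actR x (tens y z)"
  using arg_cong[OF Leib[of "(0,x)" "(0,y)" "(0,z)"], of snd]
  by (simp add: emb_prod_def pair_add_def zs pL)

lemma tens_root:
  assumes x: "x \<in> root_space_T sT actR H al" and y: "y \<in> root_space_T sT actR H be"
  shows "tens x y \<in> root_space_L0 sL br0 H (add_fun al be)"
  unfolding root_space_L0_def
proof (intro CollectI ballI)
  fix h assume h: "h \<in> H"
  have "br0 (tens x y) h = tens (sT (al h) x) y + tens x (sT (be h) y)"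
    using x y h by (simp add: idA root_space_T_def)
  also have "\<dots> = sL (al h) (tens x y) + sL (be h) (tens x y)" by (simp add: bil(3,4)[OF bT])
  also have "\<dots> = sL (add_fun al be h) (tens x y)"
    by (simp add: add_fun_def vector_space.vector_space_assms(2)[OF vsL])
  finally show "br0 (tens x y) h = sL (add_fun al be h) (tens x y)" .
qed

lemma actL_root:
  assumes w: "w \<in> root_space_L0 sL br0 H mu" and z: "z \<in> root_space_T sT actR H ga"
  shows "actL w z \<in> root_space_T sT actR H (add_fun mu ga)"
  unfolding root_space_T_def
proof (intro CollectI ballI)
  fix h assume h: "h \<in> H"
  have "actR (actL w z) h = actL (sL (mu h) w) z + actL w (sT (ga h) z)"
    using w z h by (simp add: idB root_space_T_def root_space_L0_def)
  also have "\<dots> = sT (mu h) (actL w z) + sT (ga h) (actL w z)" by (simp add: bil(3,4)[OF bLL])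
  also have "\<dots> = sT (add_fun mu ga h) (actL w z)"
    by (simp add: add_fun_def vector_space.vector_space_assms(2)[OF vsT])
  finally show "actR (actL w z) h = sT (add_fun mu ga h) (actL w z)" .
qed

lemma p_root:
  assumes "x \<in> root_space_T sT actR H al" "y \<in> root_space_T sT actR H be" "z \<in> root_space_T sT actR H ga"
  shows "p x y z \<in> root_space_T sT actR H (add_fun (add_fun al be) ga)"
  using actL_root[OF tens_root[OF assms(1,2)] assms(3)] by (simp add: pL)

lemma p_tens: "p x y z \<noteq> 0 \<Longrightarrow> tens x y \<noteq> 0"
  by (auto simp: pL zs)

lemma actR_tens: "actR x w \<noteq> 0 \<Longrightarrow> w \<noteq> 0"
  by (auto simp: zs)

end

lemma dual_add: "f \<in> dual_space sL H \<Longrightarrow> g \<in> dual_space sL H \<Longrightarrow> add_fun f g \<in> dual_space sL H"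
  by (simp add: dual_space_def add_fun_def distrib_left)
lemma dual_neg: "f \<in> dual_space sL H \<Longrightarrow> neg_fun f \<in> dual_space sL H"
  by (simp add: dual_space_def neg_fun_def)
lemma dual_zero: "zero_fun \<in> dual_space sL H"
  by (simp add: dual_space_def zero_fun_def)

lemma classT: "t \<in> root_space_T sT actR H mu \<Longrightarrow> t \<noteq> 0 \<Longrightarrow> mu \<in> dual_space sL H \<Longrightarrow>
   mu \<in> roots1 sT sL actR H \<union> {zero_fun}"
  by (auto simp: roots1_def)
lemma classL: "w \<in> root_space_L0 sL br0 H mu \<Longrightarrow> w \<noteq> 0 \<Longrightarrow> mu \<in> dual_space sL H \<Longrightarrow>
   mu = zero_fun \<or> mu \<in> roots0 sL br0 H"
  by (auto simp: roots0_def)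


lemma add_fun_comm: "add_fun f g = add_fun g f" by (simp add: add_fun_def add.commute)
lemma add_zero_neg: "add_fun f g = zero_fun \<Longrightarrow> g = neg_fun f"
  by (auto simp: add_fun_def zero_fun_def neg_fun_def fun_eq_iff eq_neg_iff_add_eq_0 add.commute)
lemma add_fun_zero: "add_fun f zero_fun = f" "add_fun zero_fun f = f"
  by (simp_all add: add_fun_def zero_fun_def)
lemma add_neg_self: "add_fun f (neg_fun f) = zero_fun"
  by (simp add: add_fun_def zero_fun_def neg_fun_def)
lemma add_fun_assoc: "add_fun (add_fun f g) h = add_fun f (add_fun g h)"
  by (simp add: add_fun_def add.assoc)

theorem lemma3p3:
  fixes sT :: "'k::field \<Rightarrow> 'v::ab_group_add \<Rightarrow> 'v"
    and sL :: "'k \<Rightarrow> 'l::ab_group_add \<Rightarrow> 'l"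
    and p :: "'v \<Rightarrow> 'v \<Rightarrow> 'v \<Rightarrow> 'v"
    and tens :: "'v \<Rightarrow> 'v \<Rightarrow> 'l"
    and br0 :: "'l \<Rightarrow> 'l \<Rightarrow> 'l"
    and actL :: "'l \<Rightarrow> 'v \<Rightarrow> 'v"
    and actR :: "'v \<Rightarrow> 'l \<Rightarrow> 'v"
    and H :: "'l set"
    and a0 a b c :: "'l \<Rightarrow> 'k"
  assumes lts: "leibniz_triple_system sT p"
    and emb: "standard_embedding sT sL p tens br0 actL actR"
    and H: "maximal_abelian_subalgebra sL br0 H"
    and split: "split_LTS sT sL p actR H"
    and sym1: "symmetric_set (roots1 sT sL actR H)"
    and sym0: "symmetric_set (roots0 sL br0 H)"
    and a0: "a0 \<in> roots1 sT sL actR H"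
    and a: "a \<in> connected_class (roots1 sT sL actR H) (roots0 sL br0 H) a0"
    and b: "b \<in> roots1 sT sL actR H \<union> {zero_fun}"
    and c: "c \<in> roots1 sT sL actR H \<union> {zero_fun}"
  shows
    "(triple_nonzero p (root_space_T sT actR H a) (root_space_T sT actR H b) (root_space_T sT actR H c)
        \<longrightarrow> b \<in> connected_class (roots1 sT sL actR H) (roots0 sL br0 H) a0 \<union> {zero_fun}
          \<and> c \<in> connected_class (roots1 sT sL actR H) (roots0 sL br0 H) a0 \<union> {zero_fun}
          \<and> add_fun (add_fun a b) c \<in> connected_class (roots1 sT sL actR H) (roots0 sL br0 H) a0 \<union> {zero_fun})
   \<and> (triple_nonzero p (root_space_T sT actR H b) (root_space_T sT actR H a) (root_space_T sT actR H c)
        \<longrightarrow> b \<in> connected_class (roots1 sT sL actR H) (roots0 sL br0 H) a0 \<union> {zero_fun}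
          \<and> c \<in> connected_class (roots1 sT sL actR H) (roots0 sL br0 H) a0 \<union> {zero_fun}
          \<and> add_fun (add_fun b a) c \<in> connected_class (roots1 sT sL actR H) (roots0 sL br0 H) a0 \<union> {zero_fun})
   \<and> (triple_nonzero p (root_space_T sT actR H b) (root_space_T sT actR H c) (root_space_T sT actR H a)
        \<longrightarrow> b \<in> connected_class (roots1 sT sL actR H) (roots0 sL br0 H) a0 \<union> {zero_fun}
          \<and> c \<in> connected_class (roots1 sT sL actR H) (roots0 sL br0 H) a0 \<union> {zero_fun}
          \<and> add_fun (add_fun b c) a \<in> connected_class (roots1 sT sL actR H) (roots0 sL br0 H) a0 \<union> {zero_fun})"
proof -
  let ?R1 = "roots1 sT sL actR H" and ?R0 = "roots0 sL br0 H"
  let ?C = "connected_class ?R1 ?R0 a0" and ?T = "root_space_T sT actR H"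
  have aR: "a \<in> ?R1" using cc_R1[OF a] .
  have D1: "f \<in> dual_space sL H" if "f \<in> ?R1 \<union> {zero_fun}" for f
    using that dual_zero by (auto simp: roots1_def)
  have aD: "a \<in> dual_space sL H" using D1 aR by simp
  have bD: "b \<in> dual_space sL H" using D1 b by simp
  have cD: "c \<in> dual_space sL H" using D1 c by simp
  have LT: "f = zero_fun \<or> f \<in> ?R0" if "x \<in> ?T f1" "y \<in> ?T f2" "tens x y \<noteq> 0"
      "f = add_fun f1 f2" "f1 \<in> dual_space sL H" "f2 \<in> dual_space sL H" for x y f f1 f2
    using classL[OF tens_root[OF lts emb that(1,2)] that(3) dual_add[OF that(5,6)]] that(4) by simp
  have PT: "add_fun (add_fun f1 f2) f3 \<in> ?R1 \<union> {zero_fun}" if "x \<in> ?T f1" "y \<in> ?T f2" "z \<in> ?T f3"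
      "p x y z \<noteq> 0" "f1 \<in> dual_space sL H" "f2 \<in> dual_space sL H" "f3 \<in> dual_space sL H" for x y z f1 f2 f3
    using classT[OF p_root[OF lts emb that(1,2,3)] that(4) dual_add[OF dual_add[OF that(5,6)] that(7)]] .
  have spl: "\<not> triple_nonzero p (?T f) (?T (neg_fun f)) (?T zero_fun)" if "f \<in> ?R1" for f
    using split that unfolding split_LTS_def by blast
  have cases2: "b \<in> ?C \<union> {zero_fun} \<and> c \<in> ?C \<union> {zero_fun} \<and> add_fun (add_fun b a) c \<in> ?C \<union> {zero_fun}"
    if y: "y \<in> ?T b" and x: "x \<in> ?T a" and z: "z \<in> ?T c" and nz: "p y x z \<noteq> 0" for x y z
  proof -
    have ba: "add_fun a b = zero_fun \<or> add_fun a b \<in> ?R0"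
      using LT[OF y x p_tens[OF lts emb nz] _ bD aD] add_fun_comm by metis
    have d: "add_fun (add_fun a b) c \<in> ?R1 \<union> {zero_fun}"
      using PT[OF y x z nz bD aD cD] add_fun_comm[of a b] by simp
    show ?thesis using ba
    proof
      assume "add_fun a b \<in> ?R0"
      from Mlem[OF sym1 sym0 a b c this d] show ?thesis using add_fun_comm[of a b] by simp
    next
      assume ab0: "add_fun a b = zero_fun"
      then have bn: "b = neg_fun a" by (rule add_zero_neg)
      have bC: "b \<in> ?C" using conn_neg[OF sym1 a] bn by simp
      have bR: "b \<in> ?R1" using cc_R1[OF bC] .
      have cnz: "c \<noteq> zero_fun"
      proof
        assume "c = zero_fun"
        then have "triple_nonzero p (?T b) (?T (neg_fun b)) (?T zero_fun)"
          using x y z nz bn unfolding triple_nonzero_def by auto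
        with spl[OF bR] show False by simp
      qed
      then have cR: "c \<in> ?R1" using c by simp
      have cC: "c \<in> ?C"
      proof (cases "p y z x = 0")
        case False
        have "add_fun b c = zero_fun \<or> add_fun b c \<in> ?R0"
          using LT[OF y z p_tens[OF lts emb False] _ bD cD] by simp
        then show ?thesis using Gminus[OF sym1 sym0 a cR] bn by simp
      next
        case True
        then have "actR y (tens x z) \<noteq> 0" using nz idC[OF lts emb, of y x z] by simp
        then have "tens x z \<noteq> 0" by (rule actR_tens[OF lts emb])
        then have "add_fun a c = zero_fun \<or> add_fun a c \<in> ?R0"
          using LT[OF x z _ _ aD cD] by simp
        then show ?thesis using Gplus[OF sym1 sym0 a cR] by simp
      qed
      have "add_fun (add_fun b a) c = c" using ab0 add_fun_comm[of a b] add_fun_zero by simp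
      then show ?thesis using bC cC by simp
    qed
  qed
  have cases1: "b \<in> ?C \<union> {zero_fun} \<and> c \<in> ?C \<union> {zero_fun} \<and> add_fun (add_fun a b) c \<in> ?C \<union> {zero_fun}"
    if x: "x \<in> ?T a" and y: "y \<in> ?T b" and z: "z \<in> ?T c" and nz: "p x y z \<noteq> 0" for x y z
  proof -
    have ab: "add_fun a b = zero_fun \<or> add_fun a b \<in> ?R0"
      using LT[OF x y p_tens[OF lts emb nz] _ aD bD] by simp
    have d: "add_fun (add_fun a b) c \<in> ?R1 \<union> {zero_fun}"
      using PT[OF x y z nz aD bD cD] .
    show ?thesis using ab
    proof
      assume "add_fun a b \<in> ?R0"
      from Mlem[OF sym1 sym0 a b c this d] show ?thesis .
    next
      assume ab0: "add_fun a b = zero_fun"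
      then have bn: "b = neg_fun a" by (rule add_zero_neg)
      have bC: "b \<in> ?C" using conn_neg[OF sym1 a] bn by simp
      have cnz: "c \<noteq> zero_fun"
      proof
        assume "c = zero_fun"
        then have "triple_nonzero p (?T a) (?T (neg_fun a)) (?T zero_fun)"
          using x y z nz bn unfolding triple_nonzero_def by auto
        with spl[OF aR] show False by simp
      qed
      then have cR: "c \<in> ?R1" using c by simp
      have cC: "c \<in> ?C"
      proof (cases "p x z y = 0")
        case False
        have "add_fun a c = zero_fun \<or> add_fun a c \<in> ?R0"
          using LT[OF x z p_tens[OF lts emb False] _ aD cD] by simp
        then show ?thesis using Gplus[OF sym1 sym0 a cR] by simp
      next
        case True
        then have "actR x (tens y z) \<noteq> 0" using nz idC[OF lts emb, of x y z] by simp
        then have "tens y z \<noteq> 0" by (rule actR_tens[OF lts emb])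
        then have "add_fun b c = zero_fun \<or> add_fun b c \<in> ?R0"
          using LT[OF y z _ _ bD cD] by simp
        then show ?thesis using Gminus[OF sym1 sym0 a cR] bn by simp
      qed
      have "add_fun (add_fun a b) c = c" using ab0 add_fun_zero by simp
      then show ?thesis using bC cC by simp
    qed
  qed
  have cases3: "b \<in> ?C \<union> {zero_fun} \<and> c \<in> ?C \<union> {zero_fun} \<and> add_fun (add_fun b c) a \<in> ?C \<union> {zero_fun}"
    if y: "y \<in> ?T b" and z: "z \<in> ?T c" and x: "x \<in> ?T a" and nz: "p y z x \<noteq> 0" for x y z
  proof -
    have bc: "add_fun b c = zero_fun \<or> add_fun b c \<in> ?R0"
      using LT[OF y z p_tens[OF lts emb nz] _ bD cD] by simp
    have d: "add_fun (add_fun b c) a \<in> ?R1 \<union> {zero_fun}"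
      using PT[OF y z x nz bD cD aD] .
    have eq: "add_fun (add_fun b c) a = add_fun (add_fun b a) c"
         "add_fun (add_fun b c) a = add_fun (add_fun a c) b"
      by (simp_all add: add_fun_def algebra_simps)
    show ?thesis
    proof (cases "p y x z = 0")
      case False
      from cases2[OF y x z False] show ?thesis using eq by simp
    next
      case True
      then have "actR y (tens z x) \<noteq> 0" using nz idC[OF lts emb, of y z x] by simp
      then have "tens z x \<noteq> 0" by (rule actR_tens[OF lts emb])
      then have ca: "add_fun a c = zero_fun \<or> add_fun a c \<in> ?R0"
        using LT[OF z x _ _ cD aD] add_fun_comm[of c a] by simp
      show ?thesis using ca
      proof
        assume "add_fun a c \<in> ?R0"
        from Mlem[OF sym1 sym0 a c b this] d eq show ?thesis by auto
      next
        assume ac0: "add_fun a c = zero_fun"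
        then have cn: "c = neg_fun a" by (rule add_zero_neg)
        have cC: "c \<in> ?C" using conn_neg[OF sym1 a] cn by simp
        have bC: "b \<in> ?C \<union> {zero_fun}"
        proof (cases "b = zero_fun")
          case False
          then have bR: "b \<in> ?R1" using b by simp
          have "add_fun (neg_fun a) b = zero_fun \<or> add_fun (neg_fun a) b \<in> ?R0"
            using bc cn add_fun_comm[of b c] by simp
          from Gminus[OF sym1 sym0 a bR this] show ?thesis by simp
        qed simp
        have "add_fun (add_fun b c) a = b" using eq(2) ac0 add_fun_zero by simp
        then show ?thesis using bC cC by simp
      qed
    qed
  qed
  show ?thesis
    using cases1 cases2 cases3 unfolding triple_nonzero_def by blast
qed

end
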